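(* Let $N_1\in\mathbb{N}$ and $N_2\in\mathbb{N}$ with $N_2\ge1$. Define $\mathbb{D}_1=[0:N_1-1]$, $\mathbb{D}_2=\{k(N_1+1): k\in[0:N_2-1]\}$, the nested array $\mathbb{D}_{\mathrm{NA}}=\mathbb{D}_1\cup(\mathbb{D}_2+N_1)$, and the symmetric array $\mathbb{S}(\mathbb{D}_{\mathrm{NA}},\ell)=\mathbb{D}_{\mathrm{NA}}\cup(\max\mathbb{D}_{\mathrm{NA}}-\mathbb{D}_{\mathrm{NA}}+\ell)$. Then, with $\ell=N_1$, $$\mathbb{S}(\mathbb{D}_{\mathrm{NA}},N_1)=\mathbb{D}_1\cup(\mathbb{D}_2+N_1)\cup(\mathbb{D}_1+(N_1+1)N_2)\triangleq\mathbb{D}_{\mathrm{CNA}}(N_1,N_2),$$ this set has exactly $2N_1+N_2$ elements, and its sum set is contiguous: $\mathbb{D}_{\mathrm{CNA}}+\mathbb{D}_{\mathrm{CNA}}=[0:2\max\mathbb{D}_{\mathrm{CNA}}]$, where $\max\mathbb{D}_{\mathrm{CNA}}=(N_1+1)N_2+N_1-1$. Moreover its difference set is also contiguous: $\mathbb{D}_{\mathrm{CNA}}-\mathbb{D}_{\mathrm{CNA}}=[-\max\mathbb{D}_{\mathrm{CNA}}:\max\mathbb{D}_{\mathrm{CNA}}]$.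
   Context: For finite sets $\mathbb{A},\mathbb{B}\subset\mathbb{Z}$ and $c\in\mathbb{Z}$: $\mathbb{A}+\mathbb{B}=\{a+b\}$, $\mathbb{A}-\mathbb{B}=\{a-b\}$, $c-\mathbb{A}=\{c-a\}$, $\mathbb{A}+c=\{a+c\}$; $[a:b]=\{c\in\mathbb{Z}: a\le c\le b\}$ (empty if $b<a$); $\mathbb{N}$ includes $0$. *)

theory Defs
  imports Main
begin

definition sumset :: "int set \<Rightarrow> int set \<Rightarrow> int set" where
  "sumset A B = {a + b | a b. a \<in> A \<and> b \<in> B}"

definition diffset :: "int set \<Rightarrow> int set \<Rightarrow> int set" where
  "diffset A B = {a - b | a b. a \<in> A \<and> b \<in> B}"

definition shift :: "int set \<Rightarrow> int \<Rightarrow> int set" where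
  "shift A c = (\<lambda>a. a + c) ` A"

definition reflect :: "int \<Rightarrow> int set \<Rightarrow> int set" where
  "reflect c A = (\<lambda>a. c - a) ` A"

definition D1 :: "nat \<Rightarrow> int set" where
  "D1 N1 = {0 .. int N1 - 1}"

definition D2 :: "nat \<Rightarrow> nat \<Rightarrow> int set" where
  "D2 N1 N2 = {k * (int N1 + 1) | k :: int. k \<in> {0 .. int N2 - 1}}"

definition DNA :: "nat \<Rightarrow> nat \<Rightarrow> int set" where
  "DNA N1 N2 = D1 N1 \<union> shift (D2 N1 N2) (int N1)"

definition symarr :: "int set \<Rightarrow> int \<Rightarrow> int set" where
  "symarr D l = D \<union> shift (reflect (Max D) D) l"

definition DCNA :: "nat \<Rightarrow> nat \<Rightarrow> int set" where
  "DCNA N1 N2 = D1 N1 \<union> shift (D2 N1 N2) (int N1)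
      \<union> shift (D1 N1) ((int N1 + 1) * int N2)"

end

theory Submission
  imports Defs
begin

lemma memB: "x \<in> shift (D2 N1 N2) (int N1) \<longleftrightarrow> (\<exists>k. 0\<le>k \<and> k < int N2 \<and> x = int N1 + k*(int N1+1))"
  unfolding D2_def shift_def image_iff by auto

lemma memA: "x \<in> D1 N1 \<longleftrightarrow> 0 \<le> x \<and> x < int N1" unfolding D1_def by auto
lemma memC: "x \<in> shift (D1 N1) c \<longleftrightarrow> c \<le> x \<and> x < c + int N1" unfolding D1_def shift_def image_iff
  by (auto intro: bexI[where x="x-c"])

lemma memDCNA: "x \<in> DCNA N1 N2 \<longleftrightarrow> (0 \<le> x \<and> x < int N1) \<or> (\<exists>k. 0\<le>k \<and> k < int N2 \<and> x = int N1 + k*(int N1+1))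
   \<or> ((int N1+1)*int N2 \<le> x \<and> x < (int N1+1)*int N2 + int N1)"
  unfolding DCNA_def Un_iff memA memB memC by blast

lemma memDNA: "x \<in> DNA N1 N2 \<longleftrightarrow> (0 \<le> x \<and> x < int N1) \<or> (\<exists>k. 0\<le>k \<and> k < int N2 \<and> x = int N1 + k*(int N1+1))"
  unfolding DNA_def Un_iff memA memB ..

lemma memSR: "x \<in> shift (reflect c D) l \<longleftrightarrow> c + l - x \<in> D"
  unfolding shift_def reflect_def image_iff by force

lemma kbound: fixes N M k :: int assumes "0 \<le> N" "0 \<le> k" "k < M"
  shows "N + k*(N+1) \<le> (N+1)*M - 1"
proof -
  have "k*(N+1) \<le> (M-1)*(N+1)" using assms by (intro mult_right_mono) auto
  thus ?thesis by (simp add: algebra_simps)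
qed


lemma NM_ge: fixes N M :: int assumes "0 \<le> N" "1 \<le> M" shows "N \<le> (N+1)*M - 1"
proof -
  have "(N+1)*1 \<le> (N+1)*M" using assms by (intro mult_left_mono) auto
  thus ?thesis by simp
qed

lemma boundDNA: assumes "N2 \<ge> 1" "x \<in> DNA N1 N2"
  shows "0 \<le> x \<and> x \<le> (int N1+1)*int N2 - 1"
  using assms(2) unfolding memDNA
proof (elim disjE exE conjE)
  assume "0 \<le> x" "x < int N1" then show ?thesis using NM_ge[of "int N1" "int N2"] assms(1) by simp
next
  fix k assume "0 \<le> k" "k < int N2" "x = int N1 + k * (int N1 + 1)"
  then show ?thesis using kbound[of "int N1" k "int N2"] by simp
qed

lemma boundDCNA: assumes "N2 \<ge> 1" "x \<in> DCNA N1 N2"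
  shows "0 \<le> x \<and> x \<le> (int N1+1)*int N2 + int N1 - 1"
proof (cases "x \<in> DNA N1 N2")
  case True then show ?thesis using boundDNA[OF assms(1) True] by simp
next
  case False
  then have "(int N1+1)*int N2 \<le> x \<and> x < (int N1+1)*int N2 + int N1" using assms(2) unfolding memDCNA memDNA by blast
  moreover have "0 \<le> (int N1+1)*int N2" by simp
  ultimately show ?thesis by linarith
qed

lemma finDCNA: assumes "N2 \<ge> 1" shows "finite (DCNA N1 N2)"
  by (rule finite_subset[of _ "{0..(int N1+1)*int N2 + int N1 - 1}"]) (use boundDCNA[OF assms] in auto)

lemma finDNA: assumes "N2 \<ge> 1" shows "finite (DNA N1 N2)"
  by (rule finite_subset[of _ "{0..(int N1+1)*int N2 - 1}"]) (use boundDNA[OF assms] in auto)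

lemma maxDCNA: assumes "N2 \<ge> 1" shows "Max (DCNA N1 N2) = (int N1+1)*int N2 + int N1 - 1"
proof (rule Max_eqI)
  show "finite (DCNA N1 N2)" by (rule finDCNA[OF assms])
  show "y \<le> (int N1+1)*int N2 + int N1 - 1" if "y \<in> DCNA N1 N2" for y
    using boundDCNA[OF assms that] by simp
  show "(int N1+1)*int N2 + int N1 - 1 \<in> DCNA N1 N2"
  proof (cases "N1 = 0")
    case True
    then show ?thesis unfolding memDCNA using assms by (auto intro!: exI[where x="int N2 - 1"])
  next
    case False
    then show ?thesis unfolding memDCNA by auto
  qed
qed

lemma maxDNA: assumes "N2 \<ge> 1" shows "Max (DNA N1 N2) = (int N1+1)*int N2 - 1"
proof (rule Max_eqI)
  show "finite (DNA N1 N2)" by (rule finDNA[OF assms])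
  show "y \<le> (int N1+1)*int N2 - 1" if "y \<in> DNA N1 N2" for y
    using boundDNA[OF assms that] by simp
  show "(int N1+1)*int N2 - 1 \<in> DNA N1 N2"
    unfolding memDNA using assms by (auto intro!: exI[where x="int N2 - 1"] simp: algebra_simps)
qed


lemma symDCNA: assumes "N2 \<ge> 1" shows "symarr (DNA N1 N2) (int N1) = DCNA N1 N2"
proof (rule set_eqI)
  fix x
  define N where "N = int N1"
  define M where "M = int N2"
  have N0: "0 \<le> N" and M1: "1 \<le> M" using assms by (auto simp: N_def M_def)
  have "x \<in> symarr (DNA N1 N2) (int N1) \<longleftrightarrow> x \<in> DNA N1 N2 \<or> (N+1)*M + N - 1 - x \<in> DNA N1 N2"
    unfolding symarr_def Un_iff memSR maxDNA[OF assms] N_def M_def by (simp add: algebra_simps)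
  also have "\<dots> \<longleftrightarrow> x \<in> DCNA N1 N2"
  proof
    assume "x \<in> DNA N1 N2 \<or> (N+1)*M + N - 1 - x \<in> DNA N1 N2"
    then show "x \<in> DCNA N1 N2"
    proof
      assume "x \<in> DNA N1 N2" then show ?thesis unfolding memDNA memDCNA by blast
    next
      assume "(N+1)*M + N - 1 - x \<in> DNA N1 N2"
      then have "(0 \<le> (N+1)*M + N - 1 - x \<and> (N+1)*M + N - 1 - x < N) \<or> (\<exists>k. 0\<le>k \<and> k < M \<and> (N+1)*M + N - 1 - x = N + k*(N+1))"
        unfolding memDNA N_def M_def .
      then show ?thesis
      proof (elim disjE exE conjE)
        assume "0 \<le> (N+1)*M + N - 1 - x" "(N+1)*M + N - 1 - x < N"
        then show ?thesis unfolding memDCNA N_def[symmetric] M_def[symmetric] by linarith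
      next
        fix k assume k: "0\<le>k" "k < M" "(N+1)*M + N - 1 - x = N + k*(N+1)"
        have "x = N + (M-1-k)*(N+1)" using k(3) by (simp add: algebra_simps)
        then show ?thesis unfolding memDCNA N_def[symmetric] M_def[symmetric] using k
          by (intro disjI2 disjI1 exI[where x="M-1-k"]) auto
      qed
    qed
  next
    assume "x \<in> DCNA N1 N2"
    then have "x \<in> DNA N1 N2 \<or> ((N+1)*M \<le> x \<and> x < (N+1)*M + N)"
      unfolding memDCNA memDNA N_def M_def by blast
    then show "x \<in> DNA N1 N2 \<or> (N+1)*M + N - 1 - x \<in> DNA N1 N2"
      unfolding memDNA N_def[symmetric] M_def[symmetric] by auto
  qed
  finally show "x \<in> symarr (DNA N1 N2) (int N1) \<longleftrightarrow> x \<in> DCNA N1 N2" .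
qed


lemma cardDCNA: assumes "N2 \<ge> 1" shows "card (DCNA N1 N2) = 2 * N1 + N2"
proof -
  define N where "N = int N1"
  define M where "M = int N2"
  have N0: "0 \<le> N" and M1: "1 \<le> M" using assms by (auto simp: N_def M_def)
  define f where "f = (\<lambda>k::int. N + k*(N+1))"
  have eq: "DCNA N1 N2 = ({0..<N} \<union> f ` {0..<M}) \<union> {(N+1)*M..<(N+1)*M+N}"
    unfolding memDCNA set_eq_iff f_def N_def M_def by auto
  have inj: "inj_on f {0..<M}" unfolding inj_on_def f_def using N0 by auto
  have fb: "y \<in> f ` {0..<M} \<Longrightarrow> N \<le> y \<and> y \<le> (N+1)*M - 1" for y
  proof -
    assume "y \<in> f ` {0..<M}"
    then obtain k where k: "0 \<le> k" "k < M" "y = f k" by auto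
    have "0 \<le> k*(N+1)" using k N0 by simp
    then show ?thesis using kbound[OF N0 k(1,2)] k(3) unfolding f_def by simp
  qed
  have d1: "{0..<N} \<inter> f ` {0..<M} = {}" using fb by force
  have d2: "({0..<N} \<union> f ` {0..<M}) \<inter> {(N+1)*M..<(N+1)*M+N} = {}"
    using fb NM_ge[OF N0 M1] by force
  have "card (DCNA N1 N2) = card ({0..<N} \<union> f ` {0..<M}) + card {(N+1)*M..<(N+1)*M+N}"
    unfolding eq by (rule card_Un_disjoint) (use d2 in auto)
  also have "card ({0..<N} \<union> f ` {0..<M}) = card {0..<N} + card (f ` {0..<M})"
    by (rule card_Un_disjoint) (use d1 in auto)
  also have "card (f ` {0..<M}) = card {0..<M}" using inj by (rule card_image)
  finally show ?thesis by (simp add: N_def M_def)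
qed


definition inD :: "int \<Rightarrow> int \<Rightarrow> int \<Rightarrow> bool" where
  "inD N M x \<longleftrightarrow> (0 \<le> x \<and> x < N) \<or> (\<exists>k. 0\<le>k \<and> k<M \<and> x = N + k*(N+1)) \<or> ((N+1)*M \<le> x \<and> x < (N+1)*M+N)"

lemma inA: "0 \<le> x \<Longrightarrow> x < N \<Longrightarrow> inD N M x" unfolding inD_def by auto
lemma inB: "0 \<le> k \<Longrightarrow> k < M \<Longrightarrow> x = N + k*(N+1) \<Longrightarrow> inD N M x" unfolding inD_def by blast
lemma inC: "(N+1)*M \<le> x \<Longrightarrow> x < (N+1)*M+N \<Longrightarrow> inD N M x" unfolding inD_def by blast

lemma klt: fixes k d M :: int assumes "0 < d" "k*d < d*M" shows "k < M"
  using assms by (simp add: mult.commute mult_less_cancel_left_pos)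

lemma sum_cover: fixes N M x :: int assumes N0: "0 \<le> N" and M1: "1 \<le> M"
  and x: "0 \<le> x" "x \<le> 2*((N+1)*M + N - 1)"
  shows "\<exists>a b. inD N M a \<and> inD N M b \<and> x = a + b"
proof -
  define d where "d = N+1"
  have d0: "0 < d" using N0 by (simp add: d_def)
  have dM: "N \<le> d*M - 1" using NM_ge[OF N0 M1] by (simp add: d_def)
  show ?thesis
  proof (cases "x < N")
    case True
    then show ?thesis using x by (intro exI[where x=x] exI[where x=0]) (auto intro: inA)
  next
    case xN: False
    show ?thesis
    proof (cases "x < N + d*M")
      case True
      define y where "y = x - N"
      define k where "k = y div d"
      define r where "r = y mod d"
      have yk: "y = k*d + r" unfolding k_def r_def by simp
      have r: "0 \<le> r" "r < d" unfolding r_def using d0 by auto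
      have k0: "0 \<le> k" unfolding k_def y_def using xN d0 by (simp add: div_int_pos_iff)
      have "k*d < d*M" using yk r True y_def by linarith
      then have kM: "k < M" using klt d0 by blast
      show ?thesis
      proof (cases "r < N")
        case True
        then show ?thesis using r yk k0 kM
          by (intro exI[where x="N + k*d"] exI[where x=r]) (auto intro: inA inB simp: y_def d_def)
      next
        case False
        then have "r = N" using r d_def by simp
        then show ?thesis using yk k0 kM M1
          by (intro exI[where x="N + k*d"] exI[where x="N + 0*d"]) (auto intro: inB simp: y_def d_def)
      qed
    next
      case xB: False
      show ?thesis
      proof (cases "x < 2*d*M")
        case True
        define y where "y = x - N - d*M"
        define k where "k = y div d"
        define r where "r = y mod d"
        have yk: "y = k*d + r" unfolding k_def r_def by simp
        have r: "0 \<le> r" "r < d" unfolding r_def using d0 by auto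
        have k0: "0 \<le> k" unfolding k_def y_def using xB d0 by (simp add: div_int_pos_iff)
        have "k*d < d*M" using yk r True y_def N0 by linarith
        then have kM: "k < M" using klt d0 by blast
        show ?thesis
        proof (cases "r < N")
          case True
          then show ?thesis using r yk k0 kM
            by (intro exI[where x="N + k*d"] exI[where x="d*M + r"]) (auto intro: inC inB simp: y_def d_def)
        next
          case False
          then have rN: "r = N" using r d_def by simp
          show ?thesis
          proof (cases "k + 1 < M")
            case True
            have "x = (N + (M-1)*d) + (N + (k+1)*d)" using yk rN y_def by (simp add: algebra_simps)
            then show ?thesis using True k0 M1
              by (intro exI[where x="N + (M-1)*d"] exI[where x="N + (k+1)*d"] conjI inB[where k="M-1"] inB[where k="k+1"])
                (auto simp: d_def)
          next
            case False
            then have "M = k + 1" using kM by simp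
            then have "x = 2*d*M + N - 1" using yk rN y_def by (simp add: algebra_simps d_def)
            then show ?thesis using True x(2) d_def by (simp add: algebra_simps)
          qed
        qed
      next
        case False
        define z where "z = x - 2*d*M"
        have z: "0 \<le> z" "z \<le> 2*N - 2" using False x(2) unfolding z_def d_def by (auto simp: algebra_simps)
        show ?thesis
        proof (cases "z < N")
          case True
          then show ?thesis using z
            by (intro exI[where x="d*M + z"] exI[where x="d*M"]) (auto intro: inC simp: z_def d_def)
        next
          case False
          then show ?thesis using z
            by (intro exI[where x="d*M + N - 1"] exI[where x="d*M + (z - N + 1)"]) (auto intro: inC simp: z_def d_def)
        qed
      qed
    qed
  qed
qed


lemma diff_cover_pos: fixes N M x :: int assumes N0: "0 \<le> N" and M1: "1 \<le> M"
  and x: "0 \<le> x" "x \<le> (N+1)*M + N - 1"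
  shows "\<exists>a b. inD N M a \<and> inD N M b \<and> x = a - b"
proof -
  define d where "d = N+1"
  have d0: "0 < d" using N0 by (simp add: d_def)
  show ?thesis
  proof (cases "x < d*M")
    case True
    define k where "k = x div d"
    define r where "r = x mod d"
    have yk: "x = k*d + r" unfolding k_def r_def by simp
    have r: "0 \<le> r" "r < d" unfolding r_def using d0 by auto
    have k0: "0 \<le> k" unfolding k_def using x d0 by (simp add: div_int_pos_iff)
    have "k*d < d*M" using yk r True by linarith
    then have kM: "k < M" using klt d0 by blast
    show ?thesis
    proof (cases "r = 0")
      case True
      then show ?thesis using yk k0 kM M1
        by (intro exI[where x="N + k*d"] exI[where x="N + 0*d"] conjI inB[where k=k] inB[where k=0]) (auto simp: d_def)
    next
      case False
      then show ?thesis using yk k0 kM r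
        by (intro exI[where x="N + k*d"] exI[where x="N - r"] conjI inB[where k=k] inA) (auto simp: d_def)
    qed
  next
    case False
    then show ?thesis using x
      by (intro exI[where x="x"] exI[where x="0"] conjI inC inA) (auto simp: d_def algebra_simps)
  qed
qed

lemma memDCNA': "x \<in> DCNA N1 N2 \<longleftrightarrow> inD (int N1) (int N2) x"
  unfolding memDCNA inD_def ..

theorem mainTheorem4:
  fixes N1 N2 :: nat
  assumes "N2 \<ge> 1"
  shows "symarr (DNA N1 N2) (int N1) = DCNA N1 N2
    \<and> card (DCNA N1 N2) = 2 * N1 + N2
    \<and> Max (DCNA N1 N2) = (int N1 + 1) * int N2 + int N1 - 1
    \<and> sumset (DCNA N1 N2) (DCNA N1 N2) = {0 .. 2 * Max (DCNA N1 N2)}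
    \<and> diffset (DCNA N1 N2) (DCNA N1 N2) = {- Max (DCNA N1 N2) .. Max (DCNA N1 N2)}"
proof (intro conjI)
  let ?Mx = "(int N1 + 1) * int N2 + int N1 - 1"
  have N0: "0 \<le> int N1" and M1: "1 \<le> int N2" using assms by auto
  note mx = maxDCNA[OF assms]
  note bd = boundDCNA[OF assms]
  show "symarr (DNA N1 N2) (int N1) = DCNA N1 N2" by (rule symDCNA[OF assms])
  show "card (DCNA N1 N2) = 2 * N1 + N2" by (rule cardDCNA[OF assms])
  show "Max (DCNA N1 N2) = ?Mx" by (rule mx)
  show "sumset (DCNA N1 N2) (DCNA N1 N2) = {0 .. 2 * Max (DCNA N1 N2)}"
  proof (rule set_eqI, rule iffI)
    fix x assume "x \<in> sumset (DCNA N1 N2) (DCNA N1 N2)"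
    then obtain a b where ab: "a \<in> DCNA N1 N2" "b \<in> DCNA N1 N2" "x = a + b" unfolding sumset_def by blast
    then show "x \<in> {0 .. 2 * Max (DCNA N1 N2)}" using bd[OF ab(1)] bd[OF ab(2)] unfolding mx by auto
  next
    fix x assume "x \<in> {0 .. 2 * Max (DCNA N1 N2)}"
    then obtain a b where "inD (int N1) (int N2) a" "inD (int N1) (int N2) b" "x = a + b"
      using sum_cover[OF N0 M1, of x] unfolding mx by auto
    then show "x \<in> sumset (DCNA N1 N2) (DCNA N1 N2)" unfolding sumset_def memDCNA' by blast
  qed
  show "diffset (DCNA N1 N2) (DCNA N1 N2) = {- Max (DCNA N1 N2) .. Max (DCNA N1 N2)}"
  proof (rule set_eqI, rule iffI)
    fix x assume "x \<in> diffset (DCNA N1 N2) (DCNA N1 N2)"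
    then obtain a b where ab: "a \<in> DCNA N1 N2" "b \<in> DCNA N1 N2" "x = a - b" unfolding diffset_def by blast
    then show "x \<in> {- Max (DCNA N1 N2) .. Max (DCNA N1 N2)}" using bd[OF ab(1)] bd[OF ab(2)] unfolding mx by auto
  next
    fix x assume x: "x \<in> {- Max (DCNA N1 N2) .. Max (DCNA N1 N2)}"
    show "x \<in> diffset (DCNA N1 N2) (DCNA N1 N2)"
    proof (cases "0 \<le> x")
      case True
      then obtain a b where "inD (int N1) (int N2) a" "inD (int N1) (int N2) b" "x = a - b"
        using diff_cover_pos[OF N0 M1, of x] x unfolding mx by auto
      then show ?thesis unfolding diffset_def memDCNA' by blast
    next
      case False
      then obtain a b where "inD (int N1) (int N2) a" "inD (int N1) (int N2) b" "- x = a - b"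
        using diff_cover_pos[OF N0 M1, of "-x"] x unfolding mx by auto
      then have "x = b - a" by simp
      then show ?thesis using \<open>inD (int N1) (int N2) a\<close> \<open>inD (int N1) (int N2) b\<close>
        unfolding diffset_def memDCNA' by blast
    qed
  qed
qed

end
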